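(* For every prime $n\ge 5$, the regular origami $\big(A_n,(1,2,3),(1,2,3,\dots,n)\big)$, where $A_n$ is the alternating group on $\{1,\dots,n\}$, $x=(1,2,3)$ and $y=(1,2,\dots,n)$, has a totally non-congruence group as Veech group.
   Context: A regular origami $(G,x,y)$ is given by a finite group $G$ generated by two elements $x,y$: it is the translation surface obtained from unit squares indexed by the elements $g\in G$, where the right edge of square $g$ is glued to the left edge of square $gx$ and the top edge of square $g$ is glued to the bottom edge of square $gy$. Two regular origamis $(G,x,y)$, $(G',x',y')$ are identified if there is a group isomorphism $G\to G'$ with $x\mapsto x'$, $y\mapsto y'$. The group $\mathrm{SL}(2,\mathbb{Z})$ acts on regular origamis via $S\cdot(G,x,y)=(G,y^{-1},x)$ and $T\cdot(G,x,y)=(G,x,yx^{-1})$, where $S=\begin{pmatrix}0&-1\\1&0\end{pmatrix}$, $T=\begin{pmatrix}1&1\\0&1\end{pmatrix}$. The Veech group of a regular origami is its stabilizer under this action, a finite index subgroup of $\mathrm{SL}(2,\mathbb{Z})$. A finite index subgroup $\Gamma\le\mathrm{SL}(2,\mathbb{Z})$ is a totally non-congruence group if for every integer $n\ge1$ the reduction map $\mathrm{SL}(2,\mathbb{Z})\to\mathrm{SL}(2,\mathbb{Z}/n\mathbb{Z})$ restricted to $\Gamma$ is surjective. *)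

theory Defs
  imports "HOL-Analysis.Analysis" "HOL-Algebra.Sym_Groups" "HOL-Combinatorics.Cycles" "HOL-Number_Theory.Cong"
begin

definition mat2 :: "int \<Rightarrow> int \<Rightarrow> int \<Rightarrow> int \<Rightarrow> int^2^2" where
  "mat2 a b c d = (\<chi> i j. if i = 1 then (if j = 1 then a else b) else (if j = 1 then c else d))"

definition SL2Z :: "(int^2^2) set" where
  "SL2Z = {M. det M = 1}"

definition regular_origami :: "('g, 'b) monoid_scheme \<Rightarrow> 'g \<Rightarrow> 'g \<Rightarrow> bool" where
  "regular_origami G x y \<longleftrightarrow> group G \<and> x \<in> carrier G \<and> y \<in> carrier G
      \<and> generate G {x, y} = carrier G"

datatype sl2gen = GenS | GenT

fun gen_mat :: "sl2gen \<Rightarrow> int^2^2" where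
  "gen_mat GenS = mat2 0 (-1) 1 0"
| "gen_mat GenT = mat2 1 1 0 1"

fun word_mat :: "sl2gen list \<Rightarrow> int^2^2" where
  "word_mat [] = mat 1"
| "word_mat (g # w) = gen_mat g ** word_mat w"

fun gen_act :: "('g, 'b) monoid_scheme \<Rightarrow> sl2gen \<Rightarrow> 'g \<times> 'g \<Rightarrow> 'g \<times> 'g" where
  "gen_act G GenS (x, y) = (inv\<^bsub>G\<^esub> y, x)"
| "gen_act G GenT (x, y) = (x, y \<otimes>\<^bsub>G\<^esub> inv\<^bsub>G\<^esub> x)"

fun word_act :: "('g, 'b) monoid_scheme \<Rightarrow> sl2gen list \<Rightarrow> 'g \<times> 'g \<Rightarrow> 'g \<times> 'g" where
  "word_act G [] p = p"
| "word_act G (g # w) p = gen_act G g (word_act G w p)"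

definition origami_iso :: "('g, 'b) monoid_scheme \<Rightarrow> 'g \<times> 'g \<Rightarrow> 'g \<times> 'g \<Rightarrow> bool" where
  "origami_iso G p q \<longleftrightarrow> (\<exists>\<phi> \<in> iso G G. \<phi> (fst p) = fst q \<and> \<phi> (snd p) = snd q)"

text \<open>Veech group: the stabiliser of (G,x,y). Every element of SL(2,Z) is a product of S and T
  (S^4 = 1 and (ST)^6 = 1), so it suffices to consider positive words.\<close>
definition veech_group :: "('g, 'b) monoid_scheme \<Rightarrow> 'g \<Rightarrow> 'g \<Rightarrow> (int^2^2) set" where
  "veech_group G x y = {M \<in> SL2Z. \<exists>w. word_mat w = M \<and> origami_iso G (word_act G w (x, y)) (x, y)}"

text \<open>Gamma surjects onto SL(2,Z/NZ) for every N >= 1: every integer matrix whose determinant is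
  1 mod N agrees entrywise mod N with some element of Gamma.\<close>
definition totally_non_congruence :: "(int^2^2) set \<Rightarrow> bool" where
  "totally_non_congruence \<Gamma> \<longleftrightarrow> \<Gamma> \<subseteq> SL2Z \<and>
     (\<forall>N::nat. N \<ge> 1 \<longrightarrow> (\<forall>B::int^2^2. [det B = 1] (mod int N) \<longrightarrow>
        (\<exists>A \<in> \<Gamma>. \<forall>i j. [A $ i $ j = B $ i $ j] (mod int N))))"

end

theory Submission
  imports Defs
begin

lemma mat2_nth[simp]:
  "mat2 a b c d $ 1 $ 1 = a" "mat2 a b c d $ 1 $ 2 = b"
  "mat2 a b c d $ 2 $ 1 = c" "mat2 a b c d $ 2 $ 2 = d"
  by (simp_all add: mat2_def)

lemma mat2_eta: "M = mat2 (M$1$1) (M$1$2) (M$2$1) (M$2$2)"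
  unfolding mat2_def by (simp add: vec_eq_iff forall_2)

lemma mat2_eq_iff: "mat2 a b c d = mat2 a' b' c' d' \<longleftrightarrow> a = a' \<and> b = b' \<and> c = c' \<and> d = d'"
  by (metis mat2_nth)

lemma mat2_mult: "mat2 a b c d ** mat2 e f g h = mat2 (a*e+b*g) (a*f+b*h) (c*e+d*g) (c*f+d*h)"
  by (simp add: matrix_matrix_mult_def sum_2 mat2_def vec_eq_iff forall_2)

lemma mat1_mat2: "(mat 1 :: int^2^2) = mat2 1 0 0 1"
  by (subst mat2_eta) (simp add: mat_def)

lemma det_mat2: "det (mat2 a b c d) = a*d - b*c"
  by (simp add: det_2)

definition cong_mat :: "int \<Rightarrow> int^2^2 \<Rightarrow> int^2^2 \<Rightarrow> bool" where
  "cong_mat k A B \<longleftrightarrow> (\<forall>i j. [A $ i $ j = B $ i $ j] (mod k))"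

lemma cong_mat_mat2: "cong_mat k (mat2 a b c d) (mat2 a' b' c' d') \<longleftrightarrow>
   [a = a'] (mod k) \<and> [b = b'] (mod k) \<and> [c = c'] (mod k) \<and> [d = d'] (mod k)"
  unfolding cong_mat_def by (simp add: forall_2)

lemma cong_mat_refl: "cong_mat k A A" unfolding cong_mat_def by simp

lemma cong_mat_trans: "cong_mat k A B \<Longrightarrow> cong_mat k B C \<Longrightarrow> cong_mat k A C"
  unfolding cong_mat_def using cong_trans by blast

lemma cong_mat_mult: "cong_mat k A B \<Longrightarrow> cong_mat k C D \<Longrightarrow> cong_mat k (A ** C) (B ** D)"
  unfolding cong_mat_def matrix_matrix_mult_def
  by (auto intro!: cong_sum cong_mult)

definition Hset :: "(int^2^2) set \<Rightarrow> int \<Rightarrow> (int^2^2) set" where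
  "Hset G k = {B. \<exists>A\<in>G. cong_mat k A B}"

definition Tm :: "int \<Rightarrow> int^2^2" where "Tm t = mat2 1 t 0 1"
definition Lm :: "int \<Rightarrow> int^2^2" where "Lm t = mat2 1 0 t 1"

locale mgrp =
  fixes G :: "(int^2^2) set" and k :: int
  assumes one: "mat 1 \<in> G" and mult: "A \<in> G \<Longrightarrow> B \<in> G \<Longrightarrow> A ** B \<in> G"
    and kpos: "k > 0"
begin

abbreviation "H \<equiv> Hset G k"

lemma H_G: "A \<in> G \<Longrightarrow> A \<in> H" unfolding Hset_def using cong_mat_refl by blast

lemma H_mult: "A \<in> H \<Longrightarrow> B \<in> H \<Longrightarrow> A ** B \<in> H"
  unfolding Hset_def using mult cong_mat_mult by blast

lemma H_cong: "A \<in> H \<Longrightarrow> cong_mat k A B \<Longrightarrow> B \<in> H"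
  unfolding Hset_def using cong_mat_trans by blast

lemma H_one: "mat2 1 0 0 1 \<in> H" using H_G one mat1_mat2 by metis

lemma ideal_lemma:
  fixes D :: "int set"
  assumes z: "0 \<in> D" and add: "\<And>a b. a \<in> D \<Longrightarrow> b \<in> D \<Longrightarrow> a + b \<in> D"
    and cg: "\<And>a b. a \<in> D \<Longrightarrow> [a = b] (mod k) \<Longrightarrow> b \<in> D"
  shows "a \<in> D \<Longrightarrow> m * a \<in> D"
proof -
  assume a: "a \<in> D"
  have nat: "int j * a \<in> D" for j :: nat
    by (induction j) (auto simp: z distrib_right intro: add[OF a])
  have "[int (nat (m mod k)) * a = m * a] (mod k)"
    using kpos by (simp add: cong_mult cong_mod_left)
  thus ?thesis using nat cg by blast
qed

lemma ideal_bezout: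
  fixes D :: "int set"
  assumes z: "0 \<in> D" and add: "\<And>a b. a \<in> D \<Longrightarrow> b \<in> D \<Longrightarrow> a + b \<in> D"
    and cg: "\<And>a b. a \<in> D \<Longrightarrow> [a = b] (mod k) \<Longrightarrow> b \<in> D"
    and a: "a \<in> D" and b: "b \<in> D" and cop: "coprime a b"
  shows "1 \<in> D"
proof -
  obtain u v where "u * a + v * b = 1"
    using cop by (metis bezout_int coprime_iff_gcd_eq_1 gcd.commute)
  moreover have "u * a \<in> D" by (rule ideal_lemma[OF z add cg a])
  moreover have "v * b \<in> D" by (rule ideal_lemma[OF z add cg b])
  ultimately show ?thesis using add by metis
qed

end

definition uA :: "int \<Rightarrow> int^2^2" where "uA s = mat2 (1+s) s (-s) (1-s)"
definition uB :: "int \<Rightarrow> int^2^2" where "uB s = mat2 (1 + 2 * s) (4 * s) (- s) (1 - 2 * s)"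

lemma Tm_add: "Tm a ** Tm b = Tm (a+b)" by (simp add: Tm_def mat2_mult add.commute)
lemma Lm_add: "Lm a ** Lm b = Lm (a+b)" by (simp add: Lm_def mat2_mult add.commute)
lemma uA_add: "uA a ** uA b = uA (a+b)" by (simp add: uA_def mat2_mult mat2_eq_iff algebra_simps)
lemma uB_add: "uB a ** uB b = uB (a+b)" by (simp add: uB_def mat2_mult mat2_eq_iff algebra_simps)

lemma Tm_cancel: "Tm (-a) ** (Tm a ** X) = X"
proof -
  have "Tm (-a) ** (Tm a ** X) = (Tm (-a) ** Tm a) ** X" by (simp add: matrix_mul_assoc)
  also have "Tm (-a) ** Tm a = mat 1" by (simp add: mat1_mat2 Tm_def mat2_mult)
  finally show ?thesis by simp
qed

lemma conjB: "Lm c ** uB s ** Lm (-c) =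
   mat2 (1 - 2* s*(2*c-1)) (4* s) (-s*(2*c-1)^2) (1 + 2* s*(2*c-1))"
  by (simp add: Lm_def uB_def mat2_mult mat2_eq_iff algebra_simps power2_eq_square)

lemma conjA: "Tm 1 ** uA s ** Tm (-1) = Lm (-s)"
  by (simp add: Tm_def Lm_def uA_def mat2_mult mat2_eq_iff algebra_simps)

lemma split_prime_power:
  fixes p N :: int assumes "p > 1" "N > 0"
  shows "\<exists>a M. N = p^a * M \<and> \<not> p dvd M \<and> M > 0"
  using assms(2)
proof (induction "nat N" arbitrary: N rule: less_induct)
  case less
  show ?case
  proof (cases "p dvd N")
    case True
    then obtain N1 where N1: "N = p * N1" by blast
    have "N1 > 0" using less.prems assms(1) N1 by (simp add: zero_less_mult_iff)
    moreover have "nat N1 < nat N" using N1 assms(1) \<open>N1 > 0\<close> by simp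
    ultimately obtain a M where "N1 = p^a * M" "\<not> p dvd M" "M > 0" using less.hyps by blast
    then show ?thesis using N1 by (metis mult.assoc power_Suc)
  next
    case False
    then show ?thesis using less.prems by (metis mult_1 power_0)
  qed
qed

locale mgrp2 = mgrp +
  fixes n :: int
  assumes n5: "n \<ge> 5" and np: "prime n"
    and gT3: "Tm 3 \<in> G" and gL: "Lm (-n) \<in> G"
    and gA: "Tm 3 ** uA (n-2) \<in> G" and gB: "Tm 3 ** uB n \<in> G"
begin

definition "DT = {t. Tm t \<in> H}"
definition "DL = {t. Lm t \<in> H}"

lemma DT_props: "0 \<in> DT" "a \<in> DT \<Longrightarrow> b \<in> DT \<Longrightarrow> a + b \<in> DT"
   "a \<in> DT \<Longrightarrow> [a = b] (mod k) \<Longrightarrow> b \<in> DT"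
proof -
  show "0 \<in> DT" using H_one by (simp add: DT_def Tm_def)
  show "a \<in> DT \<Longrightarrow> b \<in> DT \<Longrightarrow> a + b \<in> DT"
    using H_mult Tm_add by (metis DT_def mem_Collect_eq)
  show "a \<in> DT \<Longrightarrow> [a = b] (mod k) \<Longrightarrow> b \<in> DT"
    unfolding DT_def by (auto intro: H_cong simp: Tm_def cong_mat_mat2)
qed

lemma DL_props: "0 \<in> DL" "a \<in> DL \<Longrightarrow> b \<in> DL \<Longrightarrow> a + b \<in> DL"
   "a \<in> DL \<Longrightarrow> [a = b] (mod k) \<Longrightarrow> b \<in> DL"
proof -
  show "0 \<in> DL" using H_one by (simp add: DL_def Lm_def)
  show "a \<in> DL \<Longrightarrow> b \<in> DL \<Longrightarrow> a + b \<in> DL"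
    using H_mult Lm_add by (metis DL_def mem_Collect_eq)
  show "a \<in> DL \<Longrightarrow> [a = b] (mod k) \<Longrightarrow> b \<in> DL"
    unfolding DL_def by (auto intro: H_cong simp: Lm_def cong_mat_mat2)
qed

lemma DT_mult: "a \<in> DT \<Longrightarrow> m * a \<in> DT"
  by (rule ideal_lemma[of DT]) (use DT_props in auto)
lemma DL_mult: "a \<in> DL \<Longrightarrow> m * a \<in> DL"
  by (rule ideal_lemma[of DL]) (use DL_props in auto)
lemma DT_bez: "a \<in> DT \<Longrightarrow> b \<in> DT \<Longrightarrow> coprime a b \<Longrightarrow> 1 \<in> DT"
  by (rule ideal_bezout[of DT]) (use DT_props in auto)
lemma DL_bez: "a \<in> DL \<Longrightarrow> b \<in> DL \<Longrightarrow> coprime a b \<Longrightarrow> 1 \<in> DL"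
  by (rule ideal_bezout[of DL]) (use DL_props in auto)

lemma T3: "3 \<in> DT" using H_G gT3 DT_def by simp
lemma Ln: "n * m \<in> DL"
proof -
  have "-n \<in> DL" using H_G gL DL_def by simp
  from DL_mult[OF this, of "-m"] show ?thesis by (simp add: mult.commute)
qed

lemma UB: "uB n \<in> H"
proof -
  have "Tm (-3) \<in> H" using DT_mult[OF T3, of "-1"] DT_def by simp
  from H_mult[OF this H_G[OF gB]] show ?thesis
    by (simp add: Tm_cancel)
qed

lemma UA: "uA (n-2) \<in> H"
proof -
  have "Tm (-3) \<in> H" using DT_mult[OF T3, of "-1"] DT_def by simp
  from H_mult[OF this H_G[OF gA]] show ?thesis
    by (simp add: Tm_cancel)
qed

lemma UB_pow: "uB (n * int m) \<in> H"
proof (induction m)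
  case 0 show ?case using H_one by (simp add: uB_def)
next
  case (Suc m)
  from H_mult[OF Suc UB] show ?case by (simp add: uB_add algebra_simps)
qed

end


lemma prod5: "Tm a ** Lm (-d) ** Tm a ** mat2 0 (-1) 1 0 ** Tm (d*b)
       = mat2 (2*a - a*a*d) ((2*a - a*a*d)*d*b - (1-a*d)) (1-a*d) ((1-a*d)*d*b + d)"
  by (simp add: Tm_def Lm_def mat2_mult mat2_eq_iff algebra_simps)
lemma p2: "Tm q ** mat2 0 1 (-1) 0 ** mat2 (-c) (-d) r (b - q*d) = mat2 (q*c+r) b c d"
  by (simp add: Tm_def mat2_mult algebra_simps)

lemma cA: assumes kd: "k dvd a*d - 1" shows "cong_mat k (mat2 (2*a - a*a*d) ((2*a - a*a*d)*d*b - (1-a*d)) (1-a*d) ((1-a*d)*d*b + d))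
          (mat2 a b 0 d)"
      unfolding cong_mat_mat2 cong_iff_dvd_diff
    proof (intro conjI)
      have "2*a - a*a*d - a = (a*d - 1) * (-a)" by (simp add: algebra_simps)
      thus "k dvd 2*a - a*a*d - a" using kd by (metis dvd_mult2)
      have "(2*a - a*a*d)*d*b - (1-a*d) - b = (a*d - 1) * (1 - b*(a*d-1))" by (simp add: algebra_simps)
      thus "k dvd (2*a - a*a*d)*d*b - (1-a*d) - b" using kd by (metis dvd_mult2)
      have "1 - a*d - 0 = (a*d - 1) * (-1)" by (simp add: algebra_simps)
      thus "k dvd 1 - a*d - 0" using kd by (metis dvd_mult2)
      have "(1-a*d)*d*b + d - d = (a*d - 1) * (-d*b)" by (simp add: algebra_simps)
      thus "k dvd (1-a*d)*d*b + d - d" using kd by (metis dvd_mult2)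
    qed

context mgrp2 begin
lemma one_DT: "1 \<in> DT"
proof -
  have "k > 0" using kpos .
  obtain a M where k: "k = 3^a * M" and M3: "\<not> 3 dvd M" and M0: "M > 0"
    using split_prime_power[of 3 k] kpos by auto
  have p3: "prime (3::int)" by simp
  have n3: "\<not> 3 dvd n"
  proof
    assume "3 dvd n"
    hence "(3::int) = 1 \<or> 3 = n" using np unfolding prime_int_iff by (metis zero_le_numeral)
    thus False using n5 by simp
  qed
  have n3c: "coprime 3 n" using prime_imp_coprime[OF p3 n3] .
  have cop: "coprime (2*n) (3^a)"
    using n3c by (simp add: coprime_commute)
  then obtain j where j: "[2*n*j = 1] (mod 3^a)" using cong_solve_coprime_int by blast
  then obtain q where q: "2*n*j - 1 = 3^a * q" using cong_iff_dvd_diff by (metis dvd_def)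
  define c where "c = n * j"
  have "Lm c \<in> H" using Ln c_def DL_def by simp
  moreover have "Lm (-c) \<in> H" using Ln[of "-j"] c_def DL_def by simp
  ultimately have "Lm c ** uB (n * M) ** Lm (-c) \<in> H"
    using UB_pow[of "nat M"] M0 H_mult by simp
  hence E: "mat2 (1 - 2*(n*M)*(2*c-1)) (4*(n*M)) (-(n*M)*(2*c-1)^2) (1 + 2*(n*M)*(2*c-1)) \<in> H"
    by (simp add: conjB)
  have e: "2*c - 1 = 3^a * q" using q c_def by (simp add: algebra_simps)
  have "cong_mat k (mat2 (1 - 2*(n*M)*(2*c-1)) (4*(n*M)) (-(n*M)*(2*c-1)^2) (1 + 2*(n*M)*(2*c-1)))
         (Tm (4*n*M))"
    unfolding Tm_def cong_mat_mat2 cong_iff_dvd_diff e k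
  proof (intro conjI)
    show "3^a*M dvd 1 - 2*(n*M)*(3^a*q) - 1" by (rule dvdI[where k="-2*n*q"]) (simp add: algebra_simps)
    show "3^a*M dvd 4*(n*M) - 4*n*M" by simp
    show "3^a*M dvd -(n*M)*(3^a*q)^2 - 0" by (rule dvdI[where k="-n*3^a*q^2"]) (simp add: algebra_simps power2_eq_square)
    show "3^a*M dvd 1 + 2*(n*M)*(3^a*q) - 1" by (rule dvdI[where k="2*n*q"]) (simp add: algebra_simps)
  qed
  with E have "4*n*M \<in> DT" using H_cong DT_def by simp
  moreover have "coprime 3 (4*n*M)"
    using M3 n3 p3 by (simp add: prime_imp_coprime)
  ultimately show ?thesis using DT_bez T3 by blast
qed

lemma one_DL: "1 \<in> DL"
proof -
  have "Tm 1 \<in> H" "Tm (-1) \<in> H" using one_DT DT_mult[OF one_DT, of "-1"] DT_def by auto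
  hence "Tm 1 ** uA (n-2) ** Tm (-1) \<in> H" using UA H_mult by blast
  hence "-(n-2) \<in> DL" by (simp add: conjA DL_def)
  moreover have "coprime n (-(n-2))"
  proof -
    have "\<not> n dvd (n - 2)"
    proof
      assume "n dvd n - 2"
      hence "n dvd n - (n - 2)" using dvd_diff dvd_refl by blast
      hence "n dvd 2" by simp
      thus False using n5 by (auto dest: zdvd_imp_le)
    qed
    hence "coprime n (n - 2)" using prime_imp_coprime[OF np] by blast
    thus ?thesis using coprime_minus_right_iff[of n "n-2"] by simp
  qed
  ultimately show ?thesis using DL_bez Ln[of 1] by auto
qed

lemma Tm_H: "Tm t \<in> H" using DT_mult[OF one_DT, of t] DT_def by simp
lemma Lm_H: "Lm t \<in> H" using DL_mult[OF one_DL, of t] DL_def by simp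

lemma S_H: "mat2 0 (-1) 1 0 \<in> H"
proof -
  have "Tm (-1) ** Lm 1 ** Tm (-1) \<in> H" using Tm_H Lm_H H_mult by blast
  thus ?thesis by (simp add: Tm_def Lm_def mat2_mult)
qed

lemma Sinv_H: "mat2 0 1 (-1) 0 \<in> H"
proof -
  have "Tm 1 ** Lm (-1) ** Tm 1 \<in> H" using Tm_H Lm_H H_mult by blast
  thus ?thesis by (simp add: Tm_def Lm_def mat2_mult)
qed

lemma all_H_aux: "[a*d - b*c = 1] (mod k) \<Longrightarrow> nat \<bar>c\<bar> = m \<Longrightarrow> mat2 a b c d \<in> H"
proof (induction m arbitrary: a b c d rule: less_induct)
  case (less m)
  show ?case
  proof (cases "c = 0")
    case True
    hence ad: "[a*d = 1] (mod k)" using less.prems(1) by simp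
    hence kd: "k dvd a*d - 1" using cong_iff_dvd_diff by blast
    have P: "Tm a ** Lm (-d) ** Tm a ** mat2 0 (-1) 1 0 ** Tm (d*b) \<in> H"
      by (intro H_mult Tm_H Lm_H S_H)
    show ?thesis using H_cong[OF P[unfolded prod5] cA[OF kd]] True by simp
  next
    case False
    define q where "q = a div c"
    define r where "r = a mod c"
    have a: "a = q*c + r" using q_def r_def by simp
    have rc: "\<bar>r\<bar> < \<bar>c\<bar>" using False r_def abs_mod_less by blast
    have det: "(-c)*(b - q*d) - (-d)*r = a*d - b*c" using a by (simp add: algebra_simps)
    have lt: "nat \<bar>r\<bar> < m" using rc less.prems(2) by simp
    have "mat2 (-c) (-d) r (b - q*d) \<in> H"
      using less.IH[OF lt, of "-c" "b - q*d" "-d" r] less.prems(1) det by simp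
    hence "Tm q ** mat2 0 1 (-1) 0 ** mat2 (-c) (-d) r (b - q*d) \<in> H"
      by (intro H_mult Tm_H Sinv_H)
    thus ?thesis unfolding p2 a[symmetric] .
  qed
qed

lemma all_H: "[det B = 1] (mod k) \<Longrightarrow> B \<in> H"
proof -
  assume h: "[det B = 1] (mod k)"
  have "mat2 (B$1$1) (B$1$2) (B$2$1) (B$2$2) \<in> H"
    by (rule all_H_aux[OF _ refl]) (use h in \<open>simp add: det_2\<close>)
  thus ?thesis using mat2_eta[of B] by simp
qed

end


lemma word_act_append: "word_act G (w1 @ w2) p = word_act G w1 (word_act G w2 p)"
  by (induction w1) auto

lemma word_mat_append: "word_mat (w1 @ w2) = word_mat w1 ** word_mat w2"
  by (induction w1) (auto simp: matrix_mul_assoc)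

lemma word_mat_T: "word_mat (replicate k GenT) = Tm (int k)"
proof (induction k)
  case 0 thus ?case by (simp add: Tm_def mat1_mat2)
next
  case (Suc k) thus ?case by (simp add: Tm_def mat2_mult add.commute)
qed

lemma det_word_mat: "det (word_mat w) = 1"
proof (induction w)
  case Nil thus ?case by (simp add: det_I)
next
  case (Cons g w) thus ?case by (cases g) (simp_all add: det_mul det_mat2)
qed

context group begin

lemma word_act_T: "a \<in> carrier G \<Longrightarrow> b \<in> carrier G \<Longrightarrow>
   word_act G (replicate k GenT) (a, b) = (a, b \<otimes> (inv a) [^] k)"
proof (induction k)
  case 0 thus ?case by simp
next
  case (Suc k) thus ?case by (simp add: m_assoc)
qed

lemma word_act_S3: "a \<in> carrier G \<Longrightarrow> b \<in> carrier G \<Longrightarrow>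
   word_act G [GenS, GenS, GenS] (a, b) = (b, inv a)"
  by simp

lemma stab_words:
  assumes x: "x \<in> carrier G" and y: "y \<in> carrier G"
    and r1: "x [^] (3::nat) = \<one>" and r2: "y [^] n = \<one>"
    and r3: "(y \<otimes> inv x) [^] (n - 2) = \<one>"
    and r4: "(y \<otimes> inv x [^] (2::nat)) [^] n = \<one>"
  shows "word_act G (replicate 3 GenT) (x, y) = (x, y)"
    and "word_act G ([GenS, GenS, GenS] @ replicate n GenT @ [GenS]) (x, y) = (x, y)"
    and "word_act G ([GenT, GenT] @ [GenS, GenS, GenS] @ replicate (n-2) GenT @ [GenS] @ [GenT]) (x, y) = (x, y)"
    and "word_act G ([GenT] @ [GenS, GenS, GenS] @ replicate n GenT @ [GenS] @ [GenT, GenT]) (x, y) = (x, y)"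
proof -
  have ix: "inv x [^] (3::nat) = \<one>" using r1 x by (simp add: nat_pow_inv)
  have ix': "inv x \<in> carrier G" using x by simp
  show "word_act G (replicate 3 GenT) (x, y) = (x, y)"
    using word_act_T[OF x y, of 3] ix y by simp
  show "word_act G ([GenS, GenS, GenS] @ replicate n GenT @ [GenS]) (x, y) = (x, y)"
    unfolding word_act_append using x y r2 by (simp add: word_act_T)
  define z where "z = y \<otimes> inv x"
  have z: "z \<in> carrier G" using z_def x y by simp
  have "word_act G ([GenT, GenT] @ [GenS, GenS, GenS] @ replicate (n-2) GenT @ [GenS] @ [GenT]) (x, y)
     = word_act G [GenT, GenT] (word_act G [GenS, GenS, GenS] (word_act G (replicate (n-2) GenT) (inv z, x)))"
    unfolding word_act_append using x y by (simp add: z_def)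
  also have "word_act G (replicate (n-2) GenT) (inv z, x) = (inv z, x)"
    using word_act_T[of "inv z" x "n-2"] z x r3 z_def by simp
  also have "word_act G [GenT, GenT] (word_act G [GenS, GenS, GenS] (inv z, x)) = (x, z \<otimes> inv x \<otimes> inv x)"
    using z x by simp
  also have "z \<otimes> inv x \<otimes> inv x = y \<otimes> inv x [^] (3::nat)"
    using x y by (simp add: z_def m_assoc nat_pow_Suc2 numeral_3_eq_3)
  finally show "word_act G ([GenT, GenT] @ [GenS, GenS, GenS] @ replicate (n-2) GenT @ [GenS] @ [GenT]) (x, y) = (x, y)"
    using ix y by simp
  define u where "u = y \<otimes> inv x [^] (2::nat)"
  have u: "u \<in> carrier G" using u_def x y by simp
  have "word_act G ([GenT] @ [GenS, GenS, GenS] @ replicate n GenT @ [GenS] @ [GenT, GenT]) (x, y)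
     = word_act G [GenT] (word_act G [GenS, GenS, GenS] (word_act G (replicate n GenT) (inv u, x)))"
    unfolding word_act_append using x y by (simp add: u_def m_assoc numeral_2_eq_2)
  also have "word_act G (replicate n GenT) (inv u, x) = (inv u, x)"
    using word_act_T[of "inv u" x n] u x r4 u_def by simp
  also have "word_act G [GenT] (word_act G [GenS, GenS, GenS] (inv u, x)) = (x, u \<otimes> inv x)"
    using u x by simp
  also have "u \<otimes> inv x = y \<otimes> inv x [^] (3::nat)"
    using x y by (simp add: u_def m_assoc numeral_3_eq_3 numeral_2_eq_2)
  finally show "word_act G ([GenT] @ [GenS, GenS, GenS] @ replicate n GenT @ [GenS] @ [GenT, GenT]) (x, y) = (x, y)"
    using ix y by simp
qed

end

lemma words_mat:
  assumes "n \<ge> 2"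
  shows "word_mat (replicate 3 GenT) = Tm 3"
    and "word_mat ([GenS, GenS, GenS] @ replicate n GenT @ [GenS]) = Lm (- int n)"
    and "word_mat ([GenT, GenT] @ [GenS, GenS, GenS] @ replicate (n-2) GenT @ [GenS] @ [GenT]) = Tm 3 ** uA (int n - 2)"
    and "word_mat ([GenT] @ [GenS, GenS, GenS] @ replicate n GenT @ [GenS] @ [GenT, GenT]) = Tm 3 ** uB (int n)"
  using assms unfolding word_mat_append word_mat_T
  by (simp_all add: Tm_def Lm_def uA_def uB_def mat2_mult mat1_mat2 of_nat_diff mat2_eq_iff algebra_simps)



declare upt_Suc[simp del]

lemma cyc_nth: "distinct cs \<Longrightarrow> i < length cs \<Longrightarrow>
   cycle_of_list cs (cs ! i) = cs ! (Suc i mod length cs)"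
proof -
  assume d: "distinct cs" and i: "i < length cs"
  have "map (cycle_of_list cs ^^ 1) cs = rotate 1 cs" by (rule cyclic_rotation[OF d])
  hence "(cycle_of_list cs ^^ 1) (cs ! i) = rotate 1 cs ! i" by (metis i length_map nth_map)
  thus ?thesis using i by (simp add: nth_rotate1)
qed

lemma cyc_pow_out: "x \<notin> set cs \<Longrightarrow> (cycle_of_list cs ^^ m) x = x"
  by (induction m) (auto simp: id_outside_supp)

lemma cyc_pow_len: "distinct cs \<Longrightarrow> cycle_of_list cs ^^ length cs = id"
proof (rule ext)
  fix x assume d: "distinct cs"
  show "(cycle_of_list cs ^^ length cs) x = id x"
  proof (cases "x \<in> set cs")
    case True
    then obtain j where j: "j < length cs" "x = cs ! j" by (metis in_set_conv_nth)
    have "map (cycle_of_list cs ^^ length cs) cs = rotate (length cs) cs" by (rule cyclic_rotation[OF d])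
    also have "\<dots> = cs" by simp
    finally have "(cycle_of_list cs ^^ length cs) (cs ! j) = cs ! j" by (metis j(1) nth_map)
    thus ?thesis using j by simp
  qed (simp add: cyc_pow_out)
qed

lemma swapidseq_cycle: "distinct cs \<Longrightarrow> cs \<noteq> [] \<Longrightarrow> swapidseq (length cs - 1) (cycle_of_list cs)"
proof (induction cs rule: cycle_of_list.induct)
  case (1 i j cs)
  hence "swapidseq (length (j # cs) - 1) (cycle_of_list (j # cs))" by simp
  moreover have "i \<noteq> j" using 1 by simp
  ultimately have "swapidseq (Suc (length (j # cs) - 1)) (Transposition.transpose i j \<circ> cycle_of_list (j # cs))"
    by (rule comp_Suc)
  thus ?case by (simp only: cycle_of_list.simps length_Cons diff_Suc_1)
qed auto

abbreviation xx :: "nat \<Rightarrow> nat" where "xx \<equiv> cycle_of_list [1,2,3]"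
abbreviation yy :: "nat \<Rightarrow> nat \<Rightarrow> nat" where "yy n \<equiv> cycle_of_list [1..<n+1]"

lemma xx_val: "xx i = (if i = 1 then 2 else if i = 2 then 3 else if i = 3 then 1 else i)"
  by (auto simp: transpose_def)

lemma yy_val1: "1 \<le> i \<Longrightarrow> i < n \<Longrightarrow> yy n i = i + 1"
proof -
  assume i: "1 \<le> i" "i < n"
  have "yy n ([1..<n+1] ! (i - 1)) = [1..<n+1] ! (Suc (i - 1) mod n)"
    using cyc_nth[of "[1..<n+1]" "i-1"] i by simp
  thus ?thesis using i by simp
qed

lemma yy_valn: "1 \<le> n \<Longrightarrow> yy n n = 1"
proof -
  assume n: "1 \<le> n"
  have "yy n ([1..<n+1] ! (n - 1)) = [1..<n+1] ! (Suc (n - 1) mod n)"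
    using cyc_nth[of "[1..<n+1]" "n-1"] n by simp
  thus ?thesis using n by simp
qed

lemma yy_val0: "i = 0 \<or> i > n \<Longrightarrow> yy n i = i"
  by (rule id_outside_supp) auto

lemma yy_pow: "1 \<le> n \<Longrightarrow> 1 \<le> i \<Longrightarrow> i \<le> n \<Longrightarrow> (yy n ^^ k) i = (i - 1 + k) mod n + 1"
proof (induction k)
  case 0 thus ?case by simp
next
  case (Suc k)
  define m where "m = (i - 1 + k) mod n"
  have mn: "m < n" using Suc.prems m_def by simp
  have "(yy n ^^ Suc k) i = yy n (m + 1)" using Suc m_def by simp
  also have "\<dots> = (if Suc m = n then 1 else m + 2)"
    using mn yy_val1[of "m+1" n] yy_valn[of n] Suc.prems by auto
  also have "\<dots> = (i - 1 + Suc k) mod n + 1"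
    using mod_Suc[of "i - 1 + k" n] m_def by simp
  finally show ?case .
qed

lemma yy_pow_out: "i = 0 \<or> i > n \<Longrightarrow> (yy n ^^ k) i = i"
  by (rule cyc_pow_out) auto

lemma yy_permutes: "yy n permutes {1..n}"
  using cycle_permutes[of "[1..<n+1]"] by (simp add: atLeastLessThanSuc_atLeastAtMost)

lemma yy_pow_permutes: "(yy n ^^ k) permutes {1..n}"
  by (rule permutes_funpow[OF yy_permutes])

lemma xx_carrier: assumes n: "n \<ge> 3" shows "xx \<in> carrier (alt_group n)"
proof -
  have "\<exists>cs. xx = cycle_of_list cs \<and> distinct cs \<and> length cs = 3 \<and> set cs \<subseteq> {1..n}"
    by (rule exI[of _ "[1,2,3]"]) (use n in auto)
  with three_cycles_incl[of n] show ?thesis by blast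
qed

lemma yy_carrier: "odd n \<Longrightarrow> yy n \<in> carrier (alt_group n)"
proof -
  assume o: "odd n"
  hence "n \<ge> 1" by presburger
  have "swapidseq (length [1..<n+1] - 1) (yy n)"
    by (rule swapidseq_cycle) (use \<open>n \<ge> 1\<close> in auto)
  moreover have "even (length [1..<n+1] - 1)" using o by simp
  ultimately have "evenperm (yy n)" using evenperm_unique by blast
  thus ?thesis using yy_permutes alt_group_carrier by blast
qed

lemma alt_pow: "p [^]\<^bsub>alt_group n\<^esub> k = p ^^ k"
proof (induction k)
  case 0 thus ?case by (simp add: alt_group_one)
next
  case (Suc k)
  have "p ^^ Suc k = p ^^ k \<circ> p" by (rule funpow_Suc_right)
  thus ?case using Suc by (simp add: alt_group_mult del: funpow.simps)
qed

lemma xx3: "xx ^^ 3 = id"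
proof -
  have "xx ^^ length [1,2,3::nat] = id" by (rule cyc_pow_len) simp
  moreover have "length [1,2,3::nat] = 3" by simp
  ultimately show ?thesis by metis
qed

lemma yyn: "yy n ^^ n = id"
proof -
  have "yy n ^^ length [1..<n+1] = id" by (rule cyc_pow_len) simp
  moreover have "length [1..<n+1] = n" by simp
  ultimately show ?thesis by metis
qed

lemma z1_eq: assumes n: "n \<ge> 5" shows "yy n \<circ> (xx \<circ> xx) = cycle_of_list (1 # [4..<n+1])"
proof (rule ext)
  fix i
  let ?cs = "1 # [4..<n+1]"
  have d: "distinct ?cs" by simp
  have len: "length ?cs = n - 2" using n by simp
  have nth0: "?cs ! 0 = 1" by simp
  have nthS: "j < n - 3 \<Longrightarrow> ?cs ! Suc j = 4 + j" for j using n by simp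
  have Y: "yy n 1 = 2" "yy n 2 = 3" "yy n 3 = 4" "yy n n = 1" "4 \<le> i \<Longrightarrow> i < n \<Longrightarrow> yy n i = i+1"
    using yy_val1[of 1 n] yy_val1[of 2 n] yy_val1[of 3 n] yy_valn[of n] yy_val1[of i n] n by auto
  consider "i = 1" | "i = 2" | "i = 3" | "4 \<le> i \<and> i < n" | "i = n" | "i = 0 \<or> i > n" by linarith
  then show "(yy n \<circ> (xx \<circ> xx)) i = cycle_of_list ?cs i"
  proof cases
    case 1
    have "cycle_of_list ?cs (?cs ! 0) = ?cs ! (Suc 0 mod (n-2))" using cyc_nth[OF d, of 0] len n by simp
    also have "\<dots> = 4" using n nthS[of 0] by simp
    finally show ?thesis using 1 n using Y by (simp add: xx_val)
  next
    case 2
    thus ?thesis using n using Y by (simp add: xx_val id_outside_supp)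
  next
    case 3
    thus ?thesis using n using Y by (simp add: xx_val id_outside_supp)
  next
    case 4
    have a1: "Suc (i-4) < length ?cs" "Suc (Suc (i-4)) < n - 2" "Suc (i-4) < n - 3" "i - 4 < n - 3"
      using 4 len by arith+
    have "cycle_of_list ?cs (?cs ! Suc (i - 4)) = ?cs ! (Suc (Suc (i-4)) mod (n-2))"
      using cyc_nth[OF d a1(1)] len by simp
    also have "\<dots> = ?cs ! Suc (Suc (i - 4))" using a1(2) by simp
    also have "\<dots> = i + 1" using 4 nthS[OF a1(3)] by simp
    finally show ?thesis using 4 nthS[OF a1(4)] using Y by (simp add: xx_val)
  next
    case 5
    have "cycle_of_list ?cs (?cs ! Suc (n - 4)) = ?cs ! (Suc (Suc (n-4)) mod (n-2))"
      using cyc_nth[OF d, of "Suc (n-4)"] len n by simp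
    also have "\<dots> = 1" using n by (simp add: numeral_eq_Suc Suc_diff_Suc)
    finally show ?thesis using 5 n nthS[of "n - 4"] using Y by (simp add: xx_val)
  next
    case 6
    have "xx i = i" using 6 n by (auto simp: xx_val)
    moreover have "yy n i = i" by (rule yy_val0) (use 6 in auto)
    moreover have "cycle_of_list ?cs i = i" by (rule id_outside_supp) (use 6 n in auto)
    ultimately show ?thesis by simp
  qed
qed

lemma z2_eq: assumes n: "n \<ge> 5" shows "yy n \<circ> xx = cycle_of_list (1 # 3 # 2 # [4..<n+1])"
proof (rule ext)
  fix i
  let ?cs = "1 # 3 # 2 # [4..<n+1]"
  have d: "distinct ?cs" by simp
  have len: "length ?cs = n" using n by simp
  have nthS: "j < n - 3 \<Longrightarrow> ?cs ! (3 + j) = 4 + j" for j using n by simp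
  have Y: "yy n 1 = 2" "yy n 2 = 3" "yy n 3 = 4" "yy n n = 1" "4 \<le> i \<Longrightarrow> i < n \<Longrightarrow> yy n i = i+1"
    using yy_val1[of 1 n] yy_val1[of 2 n] yy_val1[of 3 n] yy_valn[of n] yy_val1[of i n] n by auto
  consider "i = 1" | "i = 2" | "i = 3" | "4 \<le> i \<and> i < n" | "i = n" | "i = 0 \<or> i > n" by linarith
  then show "(yy n \<circ> xx) i = cycle_of_list ?cs i"
  proof cases
    case 1
    have "cycle_of_list ?cs (?cs ! 0) = ?cs ! (Suc 0 mod n)" using cyc_nth[OF d, of 0] len n by simp
    thus ?thesis using 1 n using Y by (simp add: xx_val)
  next
    case 2
    have "cycle_of_list ?cs (?cs ! 2) = ?cs ! (3 mod n)" using cyc_nth[OF d, of 2] len n by simp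
    also have "\<dots> = 4" using n nthS[of 0] by simp
    finally show ?thesis using 2 n using Y by (simp add: xx_val)
  next
    case 3
    have "cycle_of_list ?cs (?cs ! 1) = ?cs ! (2 mod n)" using cyc_nth[OF d, of 1] len n by simp
    thus ?thesis using 3 n using Y by (simp add: xx_val)
  next
    case 4
    have a1: "3 + (i-4) < length ?cs" "Suc (3 + (i-4)) < n" "Suc (i-4) < n - 3" "i - 4 < n - 3"
      using 4 len by arith+
    have "cycle_of_list ?cs (?cs ! (3 + (i - 4))) = ?cs ! (Suc (3 + (i-4)) mod n)"
      using cyc_nth[OF d a1(1)] len by simp
    also have "\<dots> = ?cs ! (3 + Suc (i - 4))" using a1(2) by simp
    also have "\<dots> = i + 1" using 4 nthS[OF a1(3)] by simp
    finally show ?thesis using 4 nthS[OF a1(4)] using Y by (simp add: xx_val)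
  next
    case 5
    have "cycle_of_list ?cs (?cs ! (3 + (n - 4))) = ?cs ! (Suc (3 + (n-4)) mod n)"
      using cyc_nth[OF d, of "3 + (n-4)"] len n by simp
    also have "\<dots> = 1" using n by simp
    finally show ?thesis using 5 n nthS[of "n - 4"] using Y by (simp add: xx_val)
  next
    case 6
    have "xx i = i" using 6 n by (auto simp: xx_val)
    moreover have "yy n i = i" by (rule yy_val0) (use 6 in auto)
    moreover have "cycle_of_list ?cs i = i" by (rule id_outside_supp) (use 6 n in auto)
    ultimately show ?thesis by simp
  qed
qed

lemma z1_pow: "n \<ge> 5 \<Longrightarrow> (yy n \<circ> (xx \<circ> xx)) ^^ (n - 2) = id"
proof -
  assume n: "n \<ge> 5"
  have "cycle_of_list (1 # [4..<n+1]) ^^ length (1 # [4..<n+1]) = id" by (rule cyc_pow_len) simp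
  moreover have "length (1 # [4..<n+1]) = n - 2" using n by simp
  ultimately show ?thesis using z1_eq[OF n] by metis
qed

lemma z2_pow: "n \<ge> 5 \<Longrightarrow> (yy n \<circ> xx) ^^ n = id"
proof -
  assume n: "n \<ge> 5"
  have "cycle_of_list (1 # 3 # 2 # [4..<n+1]) ^^ length (1 # 3 # 2 # [4..<n+1]) = id" by (rule cyc_pow_len) simp
  moreover have "length (1 # 3 # 2 # [4..<n+1]) = n" using n by simp
  ultimately show ?thesis using z2_eq[OF n] by metis
qed



lemma cyc3_val: "distinct [a,b,c] \<Longrightarrow>
  cycle_of_list [a,b,c] a = b \<and> cycle_of_list [a,b,c] b = c \<and> cycle_of_list [a,b,c] c = a"
  by (auto simp: Transposition.transpose_def cycle_of_list.simps)

declare cycle_of_list.simps(1)[simp del]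

lemma cyc3_out: "i \<notin> {a,b,c} \<Longrightarrow> cycle_of_list [a,b,c] i = i"
  by (rule id_outside_supp) simp

lemma cyc3_sq: assumes d: "distinct [a,b,c]"
  shows "cycle_of_list [a,b,c] \<circ> cycle_of_list [a,b,c] = cycle_of_list [a,c,b]"
proof (rule ext)
  fix i
  have d': "distinct [a,c,b]" using d by auto
  show "(cycle_of_list [a,b,c] \<circ> cycle_of_list [a,b,c]) i = cycle_of_list [a,c,b] i"
    using cyc3_val[OF d] cyc3_val[OF d'] cyc3_out[of i a b c] cyc3_out[of i a c b]
    by (cases "i = a"; cases "i = b"; cases "i = c") auto
qed

locale gen_ctx =
  fixes n :: nat
  assumes n5: "n \<ge> 5" and nodd: "odd n"
begin

abbreviation "A \<equiv> alt_group n"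
abbreviation "Gn \<equiv> generate A {xx, yy n}"

lemma grpA: "group A" by (rule alt_group_is_group)

lemma gens_carrier: "{xx, yy n} \<subseteq> carrier A"
  using xx_carrier[of n] yy_carrier[OF nodd] n5 by auto

lemma Gn_carrier: "Gn \<subseteq> carrier A"
  using group.generate_incl[OF grpA gens_carrier] .

lemma Gn_mult: "g \<in> Gn \<Longrightarrow> h \<in> Gn \<Longrightarrow> g \<circ> h \<in> Gn"
  using generate.eng[of g A "{xx, yy n}" h] by (simp add: alt_group_mult)

lemma Gn_inv: "g \<in> Gn \<Longrightarrow> Hilbert_Choice.inv g \<in> Gn"
proof -
  assume g: "g \<in> Gn"
  have "inv\<^bsub>A\<^esub> g \<in> Gn" using group.generate_m_inv_closed[OF grpA gens_carrier g] .
  moreover have "inv\<^bsub>A\<^esub> g = Hilbert_Choice.inv g" using alt_group_inv_equality g Gn_carrier by blast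
  ultimately show ?thesis by simp
qed

lemma Gn_x: "xx \<in> Gn" by (rule generate.incl) simp
lemma Gn_y: "yy n \<in> Gn" by (rule generate.incl) simp

lemma Gn_ypow: "yy n ^^ k \<in> Gn"
proof (induction k)
  case 0 thus ?case using generate.one[of A "{xx, yy n}"] by (simp only: alt_group_one funpow_0 id_def)
next
  case (Suc k) thus ?case using Gn_mult[OF Gn_y Suc.IH] by (simp only: funpow.simps(2))
qed

lemma Gn_conj: "g \<in> Gn \<Longrightarrow> distinct cs \<Longrightarrow> cycle_of_list cs \<in> Gn \<Longrightarrow> cycle_of_list (map g cs) \<in> Gn"
proof -
  assume g: "g \<in> Gn" and d: "distinct cs" and c: "cycle_of_list cs \<in> Gn"
  have "g permutes {1..n}" using g Gn_carrier alt_group_carrier by blast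
  hence b: "bij g" by (rule permutes_bij)
  have "g \<circ> cycle_of_list cs \<circ> Hilbert_Choice.inv g \<in> Gn" using Gn_mult[OF Gn_mult[OF g c] Gn_inv[OF g]] .
  thus ?thesis using conjugation_of_cycle[OF d b] by simp
qed

lemma Gn_c: assumes j: "1 \<le> j" "j + 2 \<le> n" shows "cycle_of_list [j, j+1, j+2] \<in> Gn"
proof -
  have "map (yy n ^^ (j - 1)) [1,2,3] = [j, j+1, j+2]"
    using yy_pow[of n 1 "j-1"] yy_pow[of n 2 "j-1"] yy_pow[of n 3 "j-1"] j n5 by auto
  moreover have "cycle_of_list (map (yy n ^^ (j - 1)) [1,2,3]) \<in> Gn"
    by (rule Gn_conj[OF Gn_ypow _ Gn_x]) simp
  ultimately show ?thesis by simp
qed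

lemma Gn_t: "3 \<le> k \<Longrightarrow> k \<le> n \<Longrightarrow> cycle_of_list [1, 2, k] \<in> Gn"
proof (induction k rule: nat_induct_at_least)
  case base thus ?case using Gn_x by simp
next
  case (Suc k)
  define j where "j = (if k = 3 then 3 else k - 1)"
  have j: "1 \<le> j" "j + 2 \<le> n" using Suc j_def n5 by auto
  have d: "distinct [j, j+1, j+2]" by simp
  have j3: "j \<ge> 3" using Suc(1) j_def by auto
  have o1: "cycle_of_list [j, j+1, j+2] 1 = 1" by (rule cyc3_out) (use j3 in auto)
  have o2: "cycle_of_list [j, j+1, j+2] 2 = 2" by (rule cyc3_out) (use j3 in auto)
  have o3: "cycle_of_list [j, j+1, j+2] k = Suc k"
  proof (cases "k = 3")
    case True thus ?thesis using cyc3_val[OF d] j_def by simp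
  next
    case False
    hence "j + 1 = k" "j + 2 = Suc k" using j_def Suc(1) by auto
    thus ?thesis using cyc3_val[OF d] by metis
  qed
  have "map (cycle_of_list [j, j+1, j+2]) [1,2,k] = [1, 2, Suc k]"
    using o1 o2 o3 by simp
  moreover have "cycle_of_list (map (cycle_of_list [j, j+1, j+2]) [1,2,k]) \<in> Gn"
    by (rule Gn_conj[OF Gn_c[OF j]]) (use Suc in auto)
  ultimately show ?case by simp
qed

lemma Gn_2bc: assumes "3 \<le> b" "b \<le> n" "3 \<le> c" "c \<le> n" "b \<noteq> c"
  shows "cycle_of_list [2, b, c] \<in> Gn"
proof -
  have d: "distinct [1, 2, b]" using assms by auto
  have "map (cycle_of_list [1,2,b]) [1,2,c] = [2, b, c]"
    using cyc3_val[OF d] cyc3_out[of c 1 2 b] assms by auto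
  moreover have "cycle_of_list (map (cycle_of_list [1,2,b]) [1,2,c]) \<in> Gn"
    by (rule Gn_conj[OF Gn_t _ Gn_t]) (use assms in auto)
  ultimately show ?thesis by simp
qed

lemma Gn_1bc: assumes "2 \<le> b" "b \<le> n" "2 \<le> c" "c \<le> n" "b \<noteq> c"
  shows "cycle_of_list [1, b, c] \<in> Gn"
proof -
  consider "b = 2" | "c = 2" | "b \<ge> 3 \<and> c \<ge> 3" using assms by linarith
  then show ?thesis
  proof cases
    case 1 thus ?thesis using Gn_t assms by auto
  next
    case 2
    have d: "distinct [1, 2, b]" using assms 2 by auto
    have "cycle_of_list [1,2,b] \<circ> cycle_of_list [1,2,b] \<in> Gn"
      using Gn_mult Gn_t assms 2 by auto
    thus ?thesis using cyc3_sq[OF d] 2 by simp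
  next
    case 3
    define e where "e = (if 3 \<noteq> b \<and> 3 \<noteq> c then 3 else if 4 \<noteq> b \<and> 4 \<noteq> c then 4 else (5::nat))"
    have e: "e \<noteq> b" "e \<noteq> c" using assms unfolding e_def by auto
    have e': "3 \<le> e" "e \<le> n" using n5 unfolding e_def by auto
    have d: "distinct [2, b, e]" using e e' 3 by auto
    have "map (cycle_of_list [2,b,e]) [1,2,c] = [1, b, c]"
      using cyc3_val[OF d] cyc3_out[of c 2 b e] cyc3_out[of 1 2 b e] assms e e' 3 by auto
    moreover have "cycle_of_list (map (cycle_of_list [2,b,e]) [1,2,c]) \<in> Gn"
      by (rule Gn_conj[OF Gn_2bc _ Gn_t]) (use assms e' e 3 in auto)
    ultimately show ?thesis by simp
  qed
qed

lemma Gn_abc: assumes "a \<in> {1..n}" "b \<in> {1..n}" "c \<in> {1..n}" "distinct [a,b,c]"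
  shows "cycle_of_list [a, b, c] \<in> Gn"
proof -
  define p where "p = yy n ^^ (a - 1)"
  define q where "q = yy n ^^ (n + 1 - a)"
  have a1: "1 \<le> a" "a \<le> n" using assms(1) by auto
  have e: "a - 1 + (n + 1 - a) = n" using a1 by linarith
  have pq: "p (q i) = i" for i
  proof -
    have "p (q i) = (yy n ^^ (a - 1 + (n + 1 - a))) i" unfolding p_def q_def funpow_add by simp
    also have "\<dots> = (yy n ^^ n) i" unfolding e ..
    also have "yy n ^^ n = id" by (rule yyn)
    finally show ?thesis by simp
  qed
  have "p 1 = (1 - 1 + (a - 1)) mod n + 1" unfolding p_def by (rule yy_pow) (use n5 in auto)
  also have "\<dots> = a" using a1 by simp
  finally have p1: "p 1 = a" .
  have qperm: "q permutes {1..n}" unfolding q_def by (rule yy_pow_permutes)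
  have qb: "q b \<in> {1..n}" "q c \<in> {1..n}" using permutes_in_image[OF qperm] assms(2,3) by simp_all
  have d: "a \<noteq> b" "a \<noteq> c" "b \<noteq> c" using assms(4) by auto
  have n1: "q b \<noteq> 1"
  proof
    assume "q b = 1" hence "p (q b) = a" using p1 by simp
    thus False using pq[of b] d by simp
  qed
  have n2: "q c \<noteq> 1"
  proof
    assume "q c = 1" hence "p (q c) = a" using p1 by simp
    thus False using pq[of c] d by simp
  qed
  have n3: "q b \<noteq> q c"
  proof
    assume "q b = q c" hence "p (q b) = p (q c)" by simp
    thus False using pq[of c] pq[of b] d by simp
  qed
  have "cycle_of_list [1, q b, q c] \<in> Gn" by (rule Gn_1bc) (use qb n1 n2 n3 in auto)
  moreover have pG: "p \<in> Gn" unfolding p_def by (rule Gn_ypow)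
  moreover have dist: "distinct [1, q b, q c]" using n1 n2 n3 by simp
  ultimately have "cycle_of_list (map p [1, q b, q c]) \<in> Gn" using Gn_conj by blast
  moreover have "map p [1, q b, q c] = [a, b, c]" using p1 pq by simp
  ultimately show ?thesis by simp
qed

lemma generation: "generate A {xx, yy n} = carrier A"
proof
  show "Gn \<subseteq> carrier A" by (rule Gn_carrier)
  have sub: "subgroup Gn A" by (rule group.generate_is_subgroup[OF grpA gens_carrier])
  have "three_cycles n \<subseteq> Gn"
  proof
    fix p assume "p \<in> three_cycles n"
    then obtain cs where cs: "p = cycle_of_list cs" "distinct cs" "length cs = 3" "set cs \<subseteq> {1..n}"
      by auto
    have "cs = [cs!0, cs!1, cs!2]" using stupid_lemma[OF cs(3)] .
    moreover have "cycle_of_list [cs!0, cs!1, cs!2] \<in> Gn"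
    proof (rule Gn_abc)
      have "set [cs!0, cs!1, cs!2] \<subseteq> {1..n}" using cs(4) \<open>cs = _\<close> by metis
      thus "cs!0 \<in> {1..n}" "cs!1 \<in> {1..n}" "cs!2 \<in> {1..n}" by auto
      show "distinct [cs!0, cs!1, cs!2]" using cs(2) \<open>cs = _\<close> by metis
    qed
    ultimately show "p \<in> Gn" using cs(1) by simp
  qed
  hence "generate A (three_cycles n) \<subseteq> Gn" using group.generate_subgroup_incl[OF grpA _ sub] by blast
  thus "carrier A \<subseteq> Gn" using alt_group_carrier_as_three_cycles by metis
qed

end


lemma xx_cube: "xx \<circ> xx \<circ> xx = id"
proof -
  have "xx ^^ 3 = xx \<circ> (xx \<circ> (xx \<circ> id))" by (simp only: numeral_3_eq_3 funpow.simps)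
  thus ?thesis using xx3 by (simp add: o_assoc)
qed

theorem mainTheorem3:
  fixes n :: nat
  assumes "prime n" and "n \<ge> 5"
  shows "regular_origami (alt_group n) (cycle_of_list [1, 2, 3]) (cycle_of_list [1..<n+1])
    \<and> totally_non_congruence
        (veech_group (alt_group n) (cycle_of_list [1, 2, 3]) (cycle_of_list [1..<n+1]))"
proof -
  have n5: "n \<ge> 5" using assms(2) .
  have odd: "odd n" using prime_odd_nat[OF assms(1)] n5 by simp
  interpret gen_ctx n using n5 odd by unfold_locales
  interpret G: group "alt_group n" by (rule alt_group_is_group)
  have xc: "xx \<in> carrier (alt_group n)" using xx_carrier n5 by simp
  have yc: "yy n \<in> carrier (alt_group n)" using yy_carrier odd by simp
  have part1: "regular_origami (alt_group n) xx (yy n)"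
    unfolding regular_origami_def using G.is_group xc yc generation by simp
  have r1: "xx [^]\<^bsub>alt_group n\<^esub> (3::nat) = \<one>\<^bsub>alt_group n\<^esub>"
    by (simp only: alt_pow xx3 alt_group_one)
  have r2: "yy n [^]\<^bsub>alt_group n\<^esub> n = \<one>\<^bsub>alt_group n\<^esub>"
    by (simp only: alt_pow yyn alt_group_one)
  have xxc: "xx \<circ> xx \<in> carrier (alt_group n)" using G.m_closed[OF xc xc] by (simp add: alt_group_mult)
  have ix: "inv\<^bsub>alt_group n\<^esub> xx = xx \<circ> xx"
    by (rule G.inv_equality) (use xx_cube xc xxc in \<open>simp_all add: alt_group_mult alt_group_one\<close>)
  have r3: "(yy n \<otimes>\<^bsub>alt_group n\<^esub> inv\<^bsub>alt_group n\<^esub> xx) [^]\<^bsub>alt_group n\<^esub> (n - 2) = \<one>\<^bsub>alt_group n\<^esub>"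
    unfolding ix alt_group_mult alt_pow alt_group_one using z1_pow[OF n5] .
  have sq: "(xx \<circ> xx) ^^ 2 = xx"
  proof -
    have "(xx \<circ> xx) ^^ 2 = (xx \<circ> xx \<circ> xx) \<circ> xx" by (simp only: numeral_2_eq_2 funpow.simps o_assoc id_o o_id)
    thus ?thesis using xx_cube by simp
  qed
  have r4: "(yy n \<otimes>\<^bsub>alt_group n\<^esub> inv\<^bsub>alt_group n\<^esub> xx [^]\<^bsub>alt_group n\<^esub> (2::nat)) [^]\<^bsub>alt_group n\<^esub> n = \<one>\<^bsub>alt_group n\<^esub>"
    unfolding ix alt_group_mult alt_pow alt_group_one sq using z2_pow[OF n5] .
  note stab = G.stab_words[OF xc yc r1 r2 r3 r4]
  define \<Gamma>0 where "\<Gamma>0 = {word_mat w |w. word_act (alt_group n) w (xx, yy n) = (xx, yy n)}"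
  have sub: "\<Gamma>0 \<subseteq> veech_group (alt_group n) xx (yy n)"
  proof
    fix M assume "M \<in> \<Gamma>0"
    then obtain w where w: "M = word_mat w" "word_act (alt_group n) w (xx, yy n) = (xx, yy n)"
      unfolding \<Gamma>0_def by blast
    have "M \<in> SL2Z" unfolding SL2Z_def using w det_word_mat by simp
    moreover have "origami_iso (alt_group n) (word_act (alt_group n) w (xx, yy n)) (xx, yy n)"
      unfolding origami_iso_def w(2) using id_iso[of "alt_group n"] by (intro bexI[of _ id]) auto
    ultimately show "M \<in> veech_group (alt_group n) xx (yy n)"
      unfolding veech_group_def using w by blast
  qed
  have mem: "word_act (alt_group n) w (xx, yy n) = (xx, yy n) \<Longrightarrow> word_mat w \<in> \<Gamma>0" for w
    unfolding \<Gamma>0_def by blast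
  have part2: "totally_non_congruence (veech_group (alt_group n) xx (yy n))"
    unfolding totally_non_congruence_def
  proof (intro conjI allI impI)
    show "veech_group (alt_group n) xx (yy n) \<subseteq> SL2Z" unfolding veech_group_def by blast
    fix N :: nat and B :: "int^2^2"
    assume N: "N \<ge> 1" and B: "[det B = 1] (mod int N)"
    interpret M: mgrp2 \<Gamma>0 "int N" "int n"
    proof unfold_locales
      show "mat 1 \<in> \<Gamma>0" using mem[of "[]"] by simp
      show "P ** Q \<in> \<Gamma>0" if PG: "P \<in> \<Gamma>0" and QG: "Q \<in> \<Gamma>0" for P Q
      proof -
        obtain w1 where "P = word_mat w1" "word_act (alt_group n) w1 (xx, yy n) = (xx, yy n)"
          using PG unfolding \<Gamma>0_def by blast
        moreover obtain w2 where "Q = word_mat w2" "word_act (alt_group n) w2 (xx, yy n) = (xx, yy n)"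
          using QG unfolding \<Gamma>0_def by blast
        ultimately show ?thesis using mem[of "w1 @ w2"] by (simp add: word_act_append word_mat_append)
      qed
      show "0 < int N" using N by simp
      show "5 \<le> int n" using n5 by simp
      show "prime (int n)" using assms(1) by simp
      show "Tm 3 \<in> \<Gamma>0" using mem[OF stab(1)] words_mat(1)[of n] n5 by simp
      show "Lm (- int n) \<in> \<Gamma>0" using mem[OF stab(2)] words_mat(2)[of n] n5 by simp
      show "Tm 3 ** uA (int n - 2) \<in> \<Gamma>0" using mem[OF stab(3)] words_mat(3)[of n] n5 by simp
      show "Tm 3 ** uB (int n) \<in> \<Gamma>0" using mem[OF stab(4)] words_mat(4)[of n] n5 by simp
    qed
    have "B \<in> Hset \<Gamma>0 (int N)" by (rule M.all_H[OF B])
    then obtain P where "P \<in> \<Gamma>0" "cong_mat (int N) P B" unfolding Hset_def by blast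
    thus "\<exists>A \<in> veech_group (alt_group n) xx (yy n). \<forall>i j. [A $ i $ j = B $ i $ j] (mod int N)"
      using sub unfolding cong_mat_def by blast
  qed
  show ?thesis using part1 part2 by simp
qed



end
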